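(* Let $a,b\in\mathbb{N}$ with $a\equiv b\equiv 1\pmod 2$ (no coprimality assumed). Then $$s_{5}(a,b)+s_{5}(b,a)=\frac{1}{2}-\frac{(a,b)^{2}}{2ab}.$$
   Context: For $a,b\in\mathbb{Z}$ with $b\neq0$, the Hardy–Berndt sum is $s_{5}(a,b)=\sum_{r=0}^{|b|-1}(-1)^{r+[\frac{ar}{b}]}\left(\left(\frac{r}{b}\right)\right)$, where $[x]$ is the floor of $x$, $\{x\}=x-[x]$, and $((x))=\{x\}-\tfrac12$ for $x\notin\mathbb{Z}$, $((x))=0$ for $x\in\mathbb{Z}$. $(a,b)$ is the greatest common divisor. *)

theory Defs
  imports Complex_Main
begin

definition sawtooth :: "real \<Rightarrow> real" where
  "sawtooth x = (if x \<in> \<int> then 0 else frac x - 1/2)"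

definition s5 :: "int \<Rightarrow> int \<Rightarrow> real" where
  "s5 a b = (\<Sum>r\<in>{0..<\<bar>b\<bar>}.
      (-1) ^ nat (r + \<lfloor>real_of_int (a * r) / real_of_int b\<rfloor> mod 2)
      * sawtooth (real_of_int r / real_of_int b))"

end

theory Submission
  imports Defs "HOL-Number_Theory.Number_Theory"
begin

definition hh :: "nat \<Rightarrow> nat \<Rightarrow> nat \<Rightarrow> real" where
  "hh a b n = (-1) ^ (n div a + n div b)"

lemma neg1_div_odd: assumes "odd (a::nat)" shows "(-1::real) ^ (n div a) = (-1)^n * (-1)^(n mod a)"
proof -
  have "n = a * (n div a) + n mod a" by simp
  hence "(-1::real)^n = ((-1)^a)^(n div a) * (-1)^(n mod a)"
    by (metis power_add power_mult)
  also have "\<dots> = (-1)^(n div a) * (-1)^(n mod a)" using assms by simp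
  finally have "(-1::real)^n * (-1)^(n mod a) = (-1)^(n div a) * ((-1)^(n mod a))^2"
    by (simp add: power2_eq_square)
  thus ?thesis by (simp add: power_even_eq[symmetric])
qed

lemma hh_mod: assumes "odd a" "odd b"
  shows "hh a b n = (-1) ^ (n mod a) * (-1) ^ (n mod b)"
proof -
  have "hh a b n = ((-1)^n * (-1)^(n mod a)) * ((-1)^n * (-1)^(n mod b))"
    unfolding hh_def power_add using neg1_div_odd[OF assms(1)] neg1_div_odd[OF assms(2)] by simp
  also have "\<dots> = ((-1::real)^n)^2 * ((-1) ^ (n mod a) * (-1) ^ (n mod b))"
    by (simp add: power2_eq_square)
  finally show ?thesis by (simp add: power_even_eq[symmetric])
qed

lemma sum_alt_odd: assumes "odd (a::nat)" shows "(\<Sum>x<a. (-1::real)^x) = 1"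
proof -
  have "(\<Sum>x<2*k+1. (-1::real)^x) = 1" for k
    by (induction k) (auto simp: numeral_2_eq_2)
  thus ?thesis using assms by (metis oddE)
qed

lemma coprime_sum: assumes "odd a" "odd b" "coprime a b"
  shows "(\<Sum>m<a*b. hh a b m) = 1"
proof -
  have a0: "a > 0" "b > 0" using assms by (auto intro: odd_pos)
  have bij: "bij_betw (\<lambda>x. (x mod a, x mod b)) {..<a*b} ({..<a} \<times> {..<b})"
  proof (rule bij_betw_imageI)
    show "inj_on (\<lambda>x. (x mod a, x mod b)) {..<a*b}"
    proof (rule inj_onI)
      fix x y assume xy0: "x \<in> {..<a*b}" "y \<in> {..<a*b}" "(x mod a, x mod b) = (y mod a, y mod b)"
      hence xy: "x \<in> {..<a*b}" "y \<in> {..<a*b}" "x mod a = y mod a" "x mod b = y mod b" by auto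
      have ex: "\<exists>!z. z < a * b \<and> [z = x] (mod a) \<and> [z = x] (mod b)"
        by (rule binary_chinese_remainder_unique_nat) (insert assms a0, simp_all)
      have "x < a * b \<and> [x = x] (mod a) \<and> [x = x] (mod b)"
           "y < a * b \<and> [y = x] (mod a) \<and> [y = x] (mod b)"
        using xy by (simp_all add: cong_def)
      from this[THEN the1_equality[OF ex]] show "x = y" by simp
    qed
  next
    show "(\<lambda>x. (x mod a, x mod b)) ` {..<a*b} = {..<a} \<times> {..<b}"
    proof
      show "(\<lambda>x. (x mod a, x mod b)) ` {..<a*b} \<subseteq> {..<a} \<times> {..<b}" using a0 by auto
    next
      show "{..<a} \<times> {..<b} \<subseteq> (\<lambda>x. (x mod a, x mod b)) ` {..<a*b}"
      proof (rule subsetI)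
      fix p assume "p \<in> {..<a} \<times> {..<b}"
      then obtain u v where p: "p = (u,v)" and uv: "u \<in> {..<a}" "v \<in> {..<b}" by auto
      from binary_chinese_remainder_unique_nat[OF assms(3), of u v] a0 obtain x
        where x: "x < a * b" "[x = u] (mod a)" "[x = v] (mod b)" by auto
      hence "x mod a = u" "x mod b = v" using uv by (auto simp: cong_def)
      with x p show "p \<in> (\<lambda>x. (x mod a, x mod b)) ` {..<a*b}" by force
    qed
    qed
  qed
  have "(\<Sum>m<a*b. hh a b m) = (\<Sum>m<a*b. (\<lambda>(x,y). (-1::real)^x * (-1)^y) (m mod a, m mod b))"
    using hh_mod[OF assms(1,2)] by simp
  also have "\<dots> = (\<Sum>p\<in>{..<a} \<times> {..<b}. (\<lambda>(x,y). (-1::real)^x * (-1)^y) p)"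
    using sum.reindex_bij_betw[OF bij, of "\<lambda>(x,y). (-1::real)^x * (-1)^y"] by simp
  also have "\<dots> = (\<Sum>x<a. (-1::real)^x) * (\<Sum>y<b. (-1::real)^y)"
    by (simp add: sum_product sum.cartesian_product)
  also have "\<dots> = 1" using sum_alt_odd assms by simp
  finally show ?thesis .
qed

lemma sum_split_add: fixes f :: "nat \<Rightarrow> real" and n P :: nat
  shows "(\<Sum>m<n+P. f m) = (\<Sum>m<n. f m) + (\<Sum>j<P. f (n+j))"
  by (induction P) (auto simp: add_ac)

lemma sum_periodic: assumes "\<And>m. f (m + P) = (f m :: real)"
  shows "(\<Sum>m<k*P. f m) = real k * (\<Sum>m<P. f m)"
proof (induction k)
  case (Suc k)
  have per: "f (k*P + j) = f j" for j
    by (induction k) (auto simp: add_ac assms[of "_ + j", simplified add_ac] | metis add.assoc add.commute assms)+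
  have "(\<Sum>m<Suc k*P. f m) = (\<Sum>m<k*P. f m) + (\<Sum>j<P. f (k*P+j))"
    using sum_split_add[of f "k*P" P] by (simp add: add.commute)
  thus ?case using Suc per by (simp add: algebra_simps)
qed simp

lemma sum_div: "(\<Sum>n<d*K. f (n div d)) = real d * (\<Sum>m<K. (f m :: real))"
proof (induction K)
  case (Suc K)
  have "(\<Sum>n<d*Suc K. f (n div d)) = (\<Sum>n<d*K. f (n div d)) + (\<Sum>j<d. f ((d*K+j) div d))"
    using sum_split_add[of "\<lambda>n. f (n div d)" "d*K" d] by (simp add: ac_simps)
  also have "(\<Sum>j<d. f ((d*K+j) div d)) = (\<Sum>j<d. f K)"
    by (rule sum.cong) auto
  finally show ?case using Suc by (simp add: algebra_simps)
qed simp

lemma hh_scale: "hh (d*a) (d*b) n = hh a b (n div d)"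
  unfolding hh_def by (simp add: div_mult2_eq)

lemma hh_period: assumes "odd a" "odd b"
  shows "hh a b (m + a*b) = hh a b m"
proof -
  have a0: "a > 0" "b > 0" using assms by (auto intro: odd_pos)
  have "(m + a*b) div a = m div a + b" "(m + a*b) div b = m div b + a" using a0 by simp_all
  hence "hh a b (m + a*b) = hh a b m * (-1)^(a+b)" unfolding hh_def by (simp add: power_add algebra_simps)
  thus ?thesis using assms by simp
qed

lemma total_sum: assumes "odd a" "odd b"
  shows "(\<Sum>n<a*b. hh a b n) = real (gcd a b)^2"
proof -
  define d where "d = gcd a b"
  have a0: "a > 0" "b > 0" using assms by (auto intro: odd_pos)
  hence d0: "d > 0" unfolding d_def by simp
  obtain a' b' where ab: "a = d*a'" "b = d*b'" unfolding d_def by (meson gcd_dvd1 gcd_dvd2 dvdE)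
  have cop: "coprime a' b'" using ab d0 unfolding d_def
    by (metis coprime_iff_gcd_eq_1 gcd_mult_distrib_nat mult.right_neutral nat_mult_eq_cancel1)
  have odd': "odd a'" "odd b'" using assms ab by auto
  have "(\<Sum>n<a*b. hh a b n) = (\<Sum>n<d*(d*(a'*b')). hh a' b' (n div d))"
  proof -
    have eq: "a*b = d*(d*(a'*b'))" using ab by (simp add: ac_simps)
    show ?thesis unfolding eq by (rule sum.cong) (use ab hh_scale[of d a' b'] in auto)
  qed
  also have "\<dots> = real d * (\<Sum>m<d*(a'*b'). hh a' b' m)" by (rule sum_div)
  also have "(\<Sum>m<d*(a'*b'). hh a' b' m) = real d * (\<Sum>m<a'*b'. hh a' b' m)"
    by (rule sum_periodic) (rule hh_period[OF odd'])
  also have "(\<Sum>m<a'*b'. hh a' b' m) = 1" by (rule coprime_sum[OF odd' cop])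
  finally show ?thesis unfolding d_def[symmetric] by (simp add: power2_eq_square)
qed

lemma s5_conv: assumes "a > 0" "b > 0"
  shows "s5 (int a) (int b) = (\<Sum>k<b. hh a b (a*k) * sawtooth (real (a*k) / real (a*b)))"
proof -
  have "{0..<int b} = int ` {..<b}" by (simp add: image_int_atLeastLessThan atLeast0LessThan[symmetric])
  hence "s5 (int a) (int b) = (\<Sum>k<b. (-1) ^ nat (int k + \<lfloor>real_of_int (int a * int k) / real_of_int (int b)\<rfloor> mod 2)
      * sawtooth (real_of_int (int k) / real_of_int (int b)))"
    unfolding s5_def by (simp add: sum.reindex)
  also have "\<dots> = (\<Sum>k<b. hh a b (a*k) * sawtooth (real (a*k) / real (a*b)))"
  proof (rule sum.cong)
    fix k assume "k \<in> {..<b}"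
    have fl: "\<lfloor>real_of_int (int a * int k) / real_of_int (int b)\<rfloor> = int (a*k div b)"
      by (metis floor_divide_of_int_eq of_int_of_nat_eq of_nat_mult zdiv_int)
    have "nat (int k + int (a*k div b) mod 2) = k + (a*k div b) mod 2"
    proof -
      have "int (a*k div b) mod 2 = int ((a*k div b) mod 2)" by (simp add: of_nat_mod)
      thus ?thesis by (simp add: nat_add_distrib)
    qed
    hence sg: "(-1::real) ^ nat (int k + \<lfloor>real_of_int (int a * int k) / real_of_int (int b)\<rfloor> mod 2)
        = (-1)^(k + a*k div b)"
      unfolding fl by (simp add: power_add minus_one_power_iff)
    have "real_of_int (int k) / real_of_int (int b) = real (a*k) / real (a*b)" using assms by simp
    thus "(-1) ^ nat (int k + \<lfloor>real_of_int (int a * int k) / real_of_int (int b)\<rfloor> mod 2)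
      * sawtooth (real_of_int (int k) / real_of_int (int b)) = hh a b (a*k) * sawtooth (real (a*k) / real (a*b))"
      using sg assms unfolding hh_def by simp
  qed simp
  finally show ?thesis .
qed

lemma sum_multiples: fixes a b :: nat assumes "a > 0"
  shows "(\<Sum>k<b. g (a*k)) = (\<Sum>n<a*b. if a dvd n then g n else (0::real))"
proof -
  have "(\<Sum>n<a*b. if a dvd n then g n else (0::real)) = sum g {n\<in>{..<a*b}. a dvd n}"
    using sum.inter_filter[OF finite_lessThan[of "a*b"], of g "\<lambda>n. a dvd n"] by simp
  also have "{n\<in>{..<a*b}. a dvd n} = (\<lambda>k. a*k) ` {..<b}"
    using assms by (auto elim!: dvdE)
  also have "sum g ((\<lambda>k. a*k) ` {..<b}) = (\<Sum>k<b. g (a*k))"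
    using assms by (simp add: sum.reindex inj_on_def)
  finally show ?thesis by simp
qed

lemma saw_val: assumes "n < N"
  shows "sawtooth (real n / real N) = (if n = 0 then 0 else real n / real N - 1/2)"
proof (cases "n = 0")
  case False
  define x where "x = real n / real N"
  have x: "0 < x" "x < 1" using assms False unfolding x_def by auto
  have "frac x = x" using x by (simp add: frac_eq)
  moreover have "x \<notin> \<int>"
  proof
    assume "x \<in> \<int>" hence "frac x = 0" by (simp add: frac_eq_0_iff)
    thus False using x \<open>frac x = x\<close> by simp
  qed
  ultimately show ?thesis using False unfolding sawtooth_def x_def by simp
qed (simp add: sawtooth_def)

lemma T1: "(\<Sum>n<Suc M. (f n - f (n-1)) * real n) = real M * f M - (\<Sum>n<M. (f n :: real))"
  by (induction M) (auto simp: algebra_simps)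

lemma T2: "(\<Sum>n<Suc M. (f n - f (n-1))) = f M - (f 0 :: real)"
  by (induction M) auto

lemma hh_both: assumes "odd a" "odd b" "a dvd n" "b dvd n" shows "hh a b n = 1"
  using hh_mod[OF assms(1,2)] assms by simp

lemma hh_step: assumes "odd a" "odd b"
  shows "((if a dvd n then 1 else 0) + (if b dvd n then 1 else 0)) * hh a b n
     = (hh a b n - hh a b (n-1)) / 2 + 2 * (if a dvd n \<and> b dvd n then 1 else 0)"
proof (cases n)
  case 0
  thus ?thesis by (simp add: hh_def)
next
  case (Suc m)
  have da: "Suc m div a = (if a dvd Suc m then Suc (m div a) else m div a)"
    by (simp add: div_Suc dvd_eq_mod_eq_0)
  have db: "Suc m div b = (if b dvd Suc m then Suc (m div b) else m div b)"
    by (simp add: div_Suc dvd_eq_mod_eq_0)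
  show ?thesis
    using hh_both[OF assms, of n] Suc da db unfolding hh_def
    by (auto simp: power_add)
qed

lemma Bsum: fixes a b :: nat assumes "a > 0" "b > 0"
  shows "(\<Sum>n<a*b. (if a dvd n \<and> b dvd n then 1 else 0) * (real n / real (a*b) - 1/2)) = -1/2"
proof -
  define N where "N = a*b"
  have N0: "N > 0" using assms unfolding N_def by simp
  define g where "g n = (if a dvd n \<and> b dvd n then 1 else 0) * (real n / real N - 1/2)" for n
  have sym: "g (N - n) = - g n" if "n \<le> N" for n
  proof -
    have "a dvd N" "b dvd N" unfolding N_def by auto
    hence "(a dvd (N - n) \<and> b dvd (N - n)) = (a dvd n \<and> b dvd n)"
      using that by (metis dvd_diff_nat diff_diff_cancel)
    moreover have "real (N - n) / real N - 1/2 = - (real n / real N - 1/2)"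
      using that N0 by (simp add: of_nat_diff field_simps)
    ultimately show ?thesis unfolding g_def by simp
  qed
  have "sum g {0..N} = (\<Sum>i\<in>{0..N}. g (N + 0 - i))" by (rule sum.atLeastAtMost_rev)
  also have "\<dots> = - sum g {0..N}" by (simp add: sym sum_negf)
  finally have z: "sum g {0..N} = 0" by simp
  have "{0..N} = {..<Suc N}" by auto
  hence "sum g {0..N} = sum g {..<N} + g N" by simp
  moreover have "g N = 1/2" unfolding g_def N_def using N0 N_def by simp
  ultimately have "sum g {..<N} = -1/2" using z by simp
  thus ?thesis unfolding g_def N_def by simp
qed

theorem corollary1p2:
  fixes a b :: nat
  assumes "odd a" and "odd b"
  shows "s5 (int a) (int b) + s5 (int b) (int a)
           = 1/2 - (real (gcd a b))^2 / (2 * real a * real b)"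
proof -
  have a0: "a > 0" "b > 0" using assms by (auto intro: odd_pos)
  define N where "N = a*b"
  have N0: "N > 0" using a0 unfolding N_def by simp
  define M where "M = N - 1"
  have NM: "N = Suc M" using N0 unfolding M_def by simp
  define h where "h = hh a b"
  define sw where "sw n = sawtooth (real n / real N)" for n
  define c where "c n = real n / real N - 1/2" for n
  define J where "J n = (if a dvd n then 1 else 0) + (if b dvd n then (1::real) else 0)" for n
  define B where "B n = (if a dvd n \<and> b dvd n then (1::real) else 0)" for n
  have hsym: "hh b a = hh a b" by (rule ext) (simp add: hh_def add.commute)
  have s1: "s5 (int a) (int b) = (\<Sum>n<N. if a dvd n then h n * sw n else 0)"
    unfolding s5_conv[OF a0] using sum_multiples[OF a0(1), of "\<lambda>n. h n * sw n" b]
    unfolding h_def sw_def N_def by simp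
  have s2: "s5 (int b) (int a) = (\<Sum>n<N. if b dvd n then h n * sw n else 0)"
    unfolding s5_conv[OF a0(2,1)] using sum_multiples[OF a0(2), of "\<lambda>n. h n * sw n" a]
    unfolding h_def sw_def N_def hsym by (simp add: mult.commute)
  have "s5 (int a) (int b) + s5 (int b) (int a) = (\<Sum>n<N. J n * h n * sw n)"
    unfolding s1 s2 sum.distrib[symmetric] by (rule sum.cong) (auto simp: J_def)
  also have "\<dots> = (\<Sum>n<N. J n * h n * c n + (if n = 0 then 1 else 0))"
  proof (rule sum.cong)
    fix n assume "n \<in> {..<N}"
    thus "J n * h n * sw n = J n * h n * c n + (if n = 0 then 1 else 0)"
      using saw_val[of n N] unfolding sw_def c_def J_def h_def by (auto simp: hh_def)
  qed simp
  also have "\<dots> = (\<Sum>n<N. (h n - h (n-1)) / 2 * c n) + 2 * (\<Sum>n<N. B n * c n) + 1"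
  proof -
    have "J n * h n * c n = (h n - h (n-1)) / 2 * c n + 2 * (B n * c n)" for n
      using hh_step[OF assms, of n] unfolding J_def h_def B_def by (simp add: algebra_simps)
    thus ?thesis using N0 by (simp add: sum.distrib sum_distrib_left)
  qed
  also have "(\<Sum>n<N. B n * c n) = -1/2"
    using Bsum[OF a0] unfolding B_def c_def N_def .
  also have "(\<Sum>n<N. (h n - h (n-1)) / 2 * c n)
      = (1/(2*real N)) * (\<Sum>n<Suc M. (h n - h (n-1)) * real n) - (1/4) * (\<Sum>n<Suc M. (h n - h (n-1)))"
    unfolding NM[symmetric] sum_distrib_left sum_subtractf[symmetric]
    by (rule sum.cong) (use N0 in \<open>auto simp: c_def field_simps\<close>)
  also have "(\<Sum>n<Suc M. (h n - h (n-1)) * real n) = real M * h M - (\<Sum>n<M. h n)" by (rule T1)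
  also have "(\<Sum>n<Suc M. (h n - h (n-1))) = h M - h 0" by (rule T2)
  also have hM: "h M = 1"
  proof -
    have e1: "M = (a - 1) + a*(b-1)" unfolding M_def N_def using a0 by (cases b) (auto simp: algebra_simps)
    have "M mod a = (a - 1) mod a" by (simp only: e1 mod_mult_self2)
    hence ma: "M mod a = a - 1" using a0 by simp
    have e2: "M = (b - 1) + b*(a-1)" unfolding M_def N_def using a0 by (cases a) (auto simp: algebra_simps)
    have "M mod b = (b - 1) mod b" by (simp only: e2 mod_mult_self2)
    hence mb: "M mod b = b - 1" using a0 by simp
    have "even (a - 1)" "even (b - 1)" using assms a0 by auto
    thus ?thesis unfolding h_def hh_mod[OF assms] ma mb by simp
  qed
  also have "h 0 = 1" unfolding h_def hh_def by simp
  also have "(\<Sum>n<M. h n) = real (gcd a b)^2 - 1"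
  proof -
    have "(\<Sum>n<Suc M. h n) = real (gcd a b)^2"
      using total_sum[OF assms] unfolding h_def NM[symmetric] N_def .
    thus ?thesis using hM by simp
  qed
  finally show ?thesis using N0 unfolding NM[symmetric] N_def M_def
    by (simp add: field_simps of_nat_diff)
qed

end
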